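(* Let $n\ge2$ and let $\widehat T\subset\mathbb R^n$ be a Kuhn simplex. Then (i) $\operatorname{diam}(\widehat T)=R(\widehat T)=\sqrt n$; (ii) $w(\widehat T)=1/\sqrt2$; (iii) $1/r(\widehat T)=1+(n-1)/\sqrt2$; (iv) $\gamma(\widehat T)=\sqrt n\,(1+(n-1)/\sqrt2)$; (v) $2\gamma(\widehat T)\operatorname{diam}(\widehat T)/w(\widehat T)=2n(n+\sqrt2-1)$.
   Context: A Kuhn simplex is $[0,e_{\pi(1)},e_{\pi(1)}+e_{\pi(2)},\dots,e_{\pi(1)}+\dots+e_{\pi(n)}]$ for a permutation $\pi$ of $\{1,\dots,n\}$ and unit vectors $e_i$ of $\mathbb R^n$. For a simplex $S$: $R(S)$ is the diameter of the smallest ball containing $S$, $r(S)$ the diameter of the largest ball contained in $S$, $\gamma(S)=R(S)/r(S)$, and $w(S)=\min_f\sup_{x\in S}\operatorname{dist}(x,f)$ over the $(n-1)$-dimensional faces $f$ of $S$ (minimal height). *)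

theory Defs
  imports "HOL-Analysis.Analysis"
begin

text \<open>R^n is modelled as real^'n with n = CARD('n). A permutation of the coordinates
 is given as a bijection p from {1..n} onto the index type 'n; e_{p j} = axis (p j) 1.\<close>

definition kuhn_vertex :: "(nat \<Rightarrow> 'n::finite) \<Rightarrow> nat \<Rightarrow> real^'n" where
  "kuhn_vertex p k = (\<Sum>j\<in>{1..k}. axis (p j) 1)"

definition kuhn_simplex :: "(nat \<Rightarrow> 'n::finite) \<Rightarrow> (real^'n) set" where
  "kuhn_simplex p = convex hull {kuhn_vertex p k | k. k \<le> CARD('n)}"

definition circum_diam :: "(real^'n::finite) set \<Rightarrow> real" where
  "circum_diam S = 2 * Inf {\<rho>. \<exists>c. S \<subseteq> cball c \<rho>}"

definition in_diam :: "(real^'n::finite) set \<Rightarrow> real" where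
  "in_diam S = 2 * Sup {\<rho>. \<exists>c. cball c \<rho> \<subseteq> S}"

definition gamma_ratio :: "(real^'n::finite) set \<Rightarrow> real" where
  "gamma_ratio S = circum_diam S / in_diam S"

definition min_height :: "(real^'n::finite) set \<Rightarrow> real" where
  "min_height S = Inf ((\<lambda>f. Sup ((\<lambda>x. infdist x f) ` S)) `
      {f. f face_of S \<and> aff_dim f = int CARD('n) - 1})"

end

theory Submission
  imports Defs
begin

locale kuhn =
  fixes p :: "nat \<Rightarrow> 'n::finite"
  assumes two: "CARD('n) \<ge> 2"
    and bij: "bij_betw p {1..CARD('n)} (UNIV :: 'n set)"
begin

definition "q = inv_into {1..CARD('n)} p"
definition "v = kuhn_vertex p"
definition "V = v ` {..CARD('n)}"
definition "G (x::real^'n) j = (if j = 0 then 1 else if j \<le> CARD('n) then x $ p j else 0)"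
definition "lam x j = G x j - G x (Suc j)"
definition "U j = (if 1 \<le> j \<and> j \<le> CARD('n) then axis (p j) (1::real) else 0)"
definition "u j = U j - U (Suc j)"
definition "b j = (if j = 0 then -1 else (0::real))"

lemma inj: "inj_on p {1..CARD('n)}" using bij bij_betw_def by blast
lemma pq: "p (q i) = i" unfolding q_def using bij by (meson UNIV_I bij_betw_inv_into_right)
lemma q_range: "q i \<in> {1..CARD('n)}" unfolding q_def using bij
  by (metis UNIV_I bij_betw_def inv_into_into)
lemma p_eq: "j \<in> {1..CARD('n)} \<Longrightarrow> k \<in> {1..CARD('n)} \<Longrightarrow> p j = p k \<longleftrightarrow> j = k"
  using inj by (meson inj_on_contraD)

lemma v_coord: assumes "j \<in> {1..CARD('n)}" "l \<le> CARD('n)"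
  shows "v l $ p j = (if j \<le> l then 1 else 0)"
proof -
  have "v l $ p j = (\<Sum>i\<in>{1..l}. if i = j then 1 else 0)"
    unfolding v_def kuhn_vertex_def sum_component
    apply (rule sum.cong, simp)
    subgoal for i using assms p_eq[of i j] by (auto simp: axis_def)
    done
  also have "\<dots> = (if j \<le> l then 1 else 0)"
    using assms by (simp add: sum.delta')
  finally show ?thesis .
qed

lemma G_v: "l \<le> CARD('n) \<Longrightarrow> G (v l) j = (if j \<le> l then 1 else 0)"
  unfolding G_def using v_coord[of j l] by auto

lemma lam_v: "l \<le> CARD('n) \<Longrightarrow> lam (v l) k = (if k = l then 1 else 0)"
  unfolding lam_def using G_v by auto

lemma inner_U: "inner (U j) x = (if 1 \<le> j \<and> j \<le> CARD('n) then x $ p j else 0)"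
  unfolding U_def by (auto simp: inner_axis')

lemma lam_inner: "lam x j = inner (u j) x - b j"
  unfolding lam_def u_def b_def G_def by (auto simp: inner_diff_left inner_U)

lemma norm_u: assumes "j \<le> CARD('n)"
  shows "norm (u j) = (if j = 0 \<or> j = CARD('n) then 1 else sqrt 2)"
proof -
  have "(norm (u j))^2 = (if j = 0 \<or> j = CARD('n) then 1 else 2)"
    unfolding power2_norm_eq_inner u_def using assms two p_eq[of j "Suc j"]
    by (cases "j = 0"; cases "j = CARD('n)") (auto simp: inner_diff_left inner_diff_right inner_U U_def axis_nth inner_axis_axis)
  then show ?thesis by (metis norm_ge_zero real_sqrt_one real_sqrt_unique)
qed

definition "H = {x. \<forall>j\<le>CARD('n). 0 \<le> lam x j}"

lemma sum_lam: "(\<Sum>k\<le>CARD('n). lam x k) = 1"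
  unfolding lam_def using sum_telescope[of "G x" "CARD('n)"] by (simp add: G_def)

lemma ind_sum:
  fixes F :: "nat \<Rightarrow> real"
  shows "j \<le> Suc m \<Longrightarrow> (\<Sum>k\<le>m. (F k - F (Suc k)) * (if j \<le> k then 1 else 0)) = F j - F (Suc m)"
proof (induction m)
  case 0 then show ?case by (cases j) auto
next
  case (Suc m)
  show ?case
  proof (cases "j \<le> Suc m")
    case True then show ?thesis using Suc by simp
  next
    case False
    then have "j = Suc (Suc m)" using Suc by simp
    then show ?thesis by simp
  qed
qed

lemma V_sub_H: "V \<subseteq> H"
  unfolding V_def H_def using lam_v by auto

lemma convex_H: "convex H"
proof -
  have "H = (\<Inter>j\<in>{..CARD('n)}. {x. inner (u j) x \<ge> b j})"
    unfolding H_def by (auto simp: lam_inner)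
  then show ?thesis by (auto intro!: convex_INT convex_halfspace_ge)
qed

lemma T_eq: "kuhn_simplex p = convex hull V"
  unfolding kuhn_simplex_def V_def v_def by (simp add: setcompr_eq_image atMost_def)

lemma T_sub_H: "kuhn_simplex p \<subseteq> H"
  unfolding T_eq using V_sub_H convex_H by (simp add: hull_minimal)

lemma combo: "(\<Sum>k\<le>CARD('n). lam x k *\<^sub>R v k) = x"
unfolding vec_eq_iff proof
  fix i
  obtain j where j: "j \<in> {1..CARD('n)}" "i = p j" using pq q_range by metis
  have "(\<Sum>k\<le>CARD('n). lam x k *\<^sub>R v k) $ i = (\<Sum>k\<le>CARD('n). lam x k * (if j \<le> k then 1 else 0))"
    unfolding sum_component using j v_coord by simp
  also have "\<dots> = G x j - G x (Suc (CARD('n)))"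
    unfolding lam_def using j by (intro ind_sum) auto
  also have "\<dots> = x $ i" using j by (simp add: G_def)
  finally show "(\<Sum>k\<le>CARD('n). lam x k *\<^sub>R v k) $ i = x $ i" .
qed

lemma H_sub_T: "H \<subseteq> kuhn_simplex p"
proof
  fix x assume "x \<in> H"
  then have "(\<Sum>k\<le>CARD('n). lam x k *\<^sub>R v k) \<in> convex hull V"
    unfolding H_def V_def
    by (intro convex_sum) (auto simp: sum_lam hull_inc)
  then show "x \<in> kuhn_simplex p" using combo T_eq by simp
qed

lemma T_H: "kuhn_simplex p = H" using T_sub_H H_sub_T by auto

lemma v_any: "l \<le> CARD('n) \<Longrightarrow> v l $ i = (if q i \<le> l then 1 else 0)"
  using v_coord[of "q i" l] q_range pq by simp

lemma norm_const: fixes x :: "real^'n" assumes "\<And>i. \<bar>x $ i\<bar> = c" "c \<ge> 0"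
  shows "norm x = sqrt (real CARD('n)) * c"
proof -
  have "norm x = sqrt (\<Sum>i\<in>UNIV. (norm (x $ i))^2)"
    unfolding norm_vec_def L2_set_def by simp
  also have "\<dots> = sqrt (\<Sum>i\<in>(UNIV::'n set). c^2)"
    by (simp add: real_norm_def assms(1))
  also have "\<dots> = sqrt (real CARD('n) * c^2)" by simp
  also have "\<dots> = sqrt (real CARD('n)) * c" using assms(2) by (simp add: real_sqrt_mult)
  finally show ?thesis .
qed

definition "ch = ((\<chi> i. 1/2) :: real^'n)"

lemma V_ball: "V \<subseteq> cball ch (sqrt (real CARD('n)) / 2)"
proof
  fix y assume "y \<in> V"
  then obtain l where l: "l \<le> CARD('n)" "y = v l" unfolding V_def by auto
  have "norm (ch - y) = sqrt (real CARD('n)) * (1/2)"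
    by (rule norm_const) (auto simp: ch_def l v_any)
  then show "y \<in> cball ch (sqrt (real CARD('n)) / 2)" by (simp add: dist_norm)
qed

lemma T_ball: "kuhn_simplex p \<subseteq> cball ch (sqrt (real CARD('n)) / 2)"
  unfolding T_eq using V_ball by (simp add: hull_minimal)

lemma v_in_T: "l \<le> CARD('n) \<Longrightarrow> v l \<in> kuhn_simplex p"
  unfolding T_eq V_def by (simp add: hull_inc)

lemma dist_0n: "dist (v 0) (v (CARD('n))) = sqrt (real CARD('n))"
proof -
  have "norm (v 0 - v (CARD('n))) = sqrt (real CARD('n)) * 1"
    by (rule norm_const) (use q_range in \<open>auto simp: v_any Suc_le_eq\<close>)
  then show ?thesis by (simp add: dist_norm)
qed

lemma diam: "diameter (kuhn_simplex p) = sqrt (real CARD('n))"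
proof (rule antisym)
  show "diameter (kuhn_simplex p) \<le> sqrt (real CARD('n))"
  proof (rule diameter_le)
    show "kuhn_simplex p \<noteq> {} \<or> 0 \<le> sqrt (real CARD('n))" by simp
    fix x y assume "x \<in> kuhn_simplex p" "y \<in> kuhn_simplex p"
    then have "dist ch x \<le> sqrt (real CARD('n)) / 2" "dist ch y \<le> sqrt (real CARD('n)) / 2"
      using T_ball by auto
    moreover have "dist x y \<le> dist x ch + dist ch y" by (rule dist_triangle)
    ultimately show "norm (x - y) \<le> sqrt (real CARD('n))"
      by (simp add: dist_norm[symmetric] dist_commute)
  qed
  show "sqrt (real CARD('n)) \<le> diameter (kuhn_simplex p)"
  proof -
    have "bounded (kuhn_simplex p)" using T_ball bounded_cball bounded_subset by blast
    then show ?thesis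
      using diameter_bounded_bound[of "kuhn_simplex p" "v 0" "v (CARD('n))"] dist_0n v_in_T by simp
  qed
qed

lemma circ: "circum_diam (kuhn_simplex p) = sqrt (real CARD('n))"
proof -
  have "Inf {\<rho>. \<exists>c. kuhn_simplex p \<subseteq> cball c \<rho>} = sqrt (real CARD('n)) / 2"
  proof (rule cInf_eq_minimum)
    show "sqrt (real CARD('n)) / 2 \<in> {\<rho>. \<exists>c. kuhn_simplex p \<subseteq> cball c \<rho>}"
      using T_ball by auto
    fix r assume "r \<in> {\<rho>. \<exists>c. kuhn_simplex p \<subseteq> cball c \<rho>}"
    then obtain c where "kuhn_simplex p \<subseteq> cball c r" by auto
    then have "dist c (v 0) \<le> r" "dist c (v (CARD('n))) \<le> r" using v_in_T[of 0] v_in_T[of "CARD('n)"] by auto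
    moreover have "dist (v 0) (v (CARD('n))) \<le> dist (v 0) c + dist c (v (CARD('n)))" by (rule dist_triangle)
    ultimately have "dist (v 0) (v (CARD('n))) \<le> 2 * r"
      by (simp add: dist_commute)
    then show "sqrt (real CARD('n)) / 2 \<le> r" using dist_0n by simp
  qed
  then show ?thesis unfolding circum_diam_def by simp
qed

definition "r0 = 1 / (2 + (real CARD('n) - 1) * sqrt 2)"
definition "c0 = ((\<chi> i. 1 - r0 - (real (q i) - 1) * sqrt 2 * r0) :: real^'n)"

lemma den_pos: "2 + (real CARD('n) - 1) * sqrt 2 > 0"
  using two by (intro add_pos_nonneg) auto

lemma r0_pos: "r0 > 0"
  unfolding r0_def using two by (auto intro!: divide_pos_pos add_pos_nonneg)

lemma r0_eq: "1 - r0 - (real CARD('n) - 1) * sqrt 2 * r0 = r0"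
proof -
  have "(2 + (real CARD('n) - 1) * sqrt 2) * r0 = 1"
    unfolding r0_def using den_pos by simp
  then show ?thesis by (simp add: algebra_simps)
qed

lemma G_c0: "j \<in> {1..CARD('n)} \<Longrightarrow> G c0 j = 1 - r0 - (real j - 1) * sqrt 2 * r0"
  unfolding G_def c0_def using p_eq q_range pq
  by (metis (no_types, lifting) atLeastAtMost_iff not_one_le_zero vec_lambda_beta)

lemma lam_c0: assumes "j \<le> CARD('n)" shows "lam c0 j = r0 * norm (u j)"
proof -
  consider "j = 0" | "j = CARD('n)" | "1 \<le> j" "j < CARD('n)" using assms by linarith
  then show ?thesis
  proof cases
    case 1 then show ?thesis using G_c0[of 1] two norm_u[of 0] by (simp add: lam_def G_def)
  next
    case 2 then show ?thesis using G_c0[of "CARD('n)"] two norm_u[of "CARD('n)"] r0_eq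
      by (simp add: lam_def G_def)
  next
    case 3 then show ?thesis using G_c0[of j] G_c0[of "Suc j"] two norm_u[of j]
      by (simp add: lam_def algebra_simps)
  qed
qed

lemma lam_diff: "lam x j - lam y j = inner (u j) (x - y)"
  by (simp add: lam_inner inner_diff_right)

lemma lam_ball: "lam x j \<ge> lam c j - norm (u j) * dist x c"
proof -
  have "\<bar>inner (u j) (x - c)\<bar> \<le> norm (u j) * norm (x - c)" by (rule Cauchy_Schwarz_ineq2)
  then show ?thesis using lam_diff[of x j c] by (simp add: dist_norm)
qed

lemma ball_c0: "cball c0 r0 \<subseteq> kuhn_simplex p"
proof
  fix x assume "x \<in> cball c0 r0"
  then have d: "dist x c0 \<le> r0" by (simp add: dist_commute)
  have "0 \<le> lam x j" if "j \<le> CARD('n)" for j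
  proof -
    have "lam x j \<ge> lam c0 j - norm (u j) * dist x c0" by (rule lam_ball)
    moreover have "norm (u j) * dist x c0 \<le> norm (u j) * r0" using d by (simp add: mult_left_mono)
    ultimately show ?thesis using lam_c0[OF that] by (simp add: algebra_simps)
  qed
  then show "x \<in> kuhn_simplex p" unfolding T_H H_def by auto
qed

lemma sum_norm_u: "(\<Sum>j\<le>CARD('n). norm (u j)) = 2 + (real CARD('n) - 1) * sqrt 2"
proof -
  have "(\<Sum>j\<le>CARD('n). norm (u j)) = (\<Sum>j\<le>CARD('n). sqrt 2 - (sqrt 2 - 1) * (if j = 0 then 1 else 0)
          - (sqrt 2 - 1) * (if j = CARD('n) then 1 else 0))"
    using two by (intro sum.cong) (auto simp: norm_u)
  also have "\<dots> = (real CARD('n) + 1) * sqrt 2 - (sqrt 2 - 1) - (sqrt 2 - 1)"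
    by (simp add: sum_subtractf sum_distrib_left[symmetric])
  finally show ?thesis by (simp add: algebra_simps)
qed

lemma u_nz: "j \<le> CARD('n) \<Longrightarrow> norm (u j) > 0"
  using norm_u by auto

lemma ball_bound: assumes "cball c r \<subseteq> kuhn_simplex p" shows "r \<le> r0"
proof (cases "r \<ge> 0")
  case False then show ?thesis using r0_pos by simp
next
  case True
  have key: "r * norm (u j) \<le> lam c j" if j: "j \<le> CARD('n)" for j
  proof -
    define y where "y = c - (r / norm (u j)) *\<^sub>R u j"
    have "dist c y = r" unfolding y_def dist_norm using True u_nz[OF j] by simp
    then have "y \<in> kuhn_simplex p" using assms by auto
    then have "0 \<le> lam y j" using j unfolding T_H H_def by auto
    moreover have "lam c j - lam y j = r * norm (u j)"
      unfolding lam_diff y_def using u_nz[OF j]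
      by (simp add: power2_norm_eq_inner[symmetric] power2_eq_square)
    ultimately show ?thesis by simp
  qed
  have "r * (2 + (real CARD('n) - 1) * sqrt 2) = (\<Sum>j\<le>CARD('n). r * norm (u j))"
    by (simp only: sum_distrib_left[symmetric] sum_norm_u)
  also have "\<dots> \<le> (\<Sum>j\<le>CARD('n). lam c j)" by (intro sum_mono key) simp
  also have "\<dots> = 1" by (rule sum_lam)
  finally have "r * (2 + (real CARD('n) - 1) * sqrt 2) \<le> 1" .
  moreover have "2 + (real CARD('n) - 1) * sqrt 2 > 0" by (rule den_pos)
  ultimately show ?thesis unfolding r0_def by (simp add: field_simps)
qed

lemma indiam: "in_diam (kuhn_simplex p) = 2 * r0"
proof -
  have "Sup {\<rho>. \<exists>c. cball c \<rho> \<subseteq> kuhn_simplex p} = r0"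
    by (rule cSup_eq_maximum) (use ball_c0 ball_bound in auto)
  then show ?thesis unfolding in_diam_def by simp
qed

lemma interior_T: "interior (kuhn_simplex p) \<noteq> {}"
proof -
  have "ball c0 r0 \<subseteq> interior (kuhn_simplex p)"
    using ball_c0 by (meson ball_subset_cball interior_maximal open_ball order_trans)
  then show ?thesis using r0_pos by auto
qed

lemma aff_V: "aff_dim V = int CARD('n)"
  using aff_dim_nonempty_interior[OF interior_T] aff_dim_convex_hull[of V] T_eq by simp

lemma inj_v: "inj_on v {..CARD('n)}"
proof (rule inj_onI)
  fix l l' assume l: "l \<in> {..CARD('n)}" "l' \<in> {..CARD('n)}" "v l = v l'"
  then have "G (v l) l = G (v l') l" "G (v l) l' = G (v l') l'" by auto
  then show "l = l'"
  proof -
    have a: "G (v l) l = 1" "G (v l') l' = 1" using l(1,2) G_v by auto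
    have "l \<le> l'"
    proof (rule ccontr)
      assume "\<not> l \<le> l'"
      then have "G (v l') l = 0" using l(1,2) G_v by auto
      then show False using a \<open>G (v l) l = G (v l') l\<close> by simp
    qed
    moreover have "l' \<le> l"
    proof (rule ccontr)
      assume "\<not> l' \<le> l"
      then have "G (v l) l' = 0" using l(1,2) G_v by auto
      then show False using a \<open>G (v l) l' = G (v l') l'\<close> by simp
    qed
    ultimately show ?thesis by simp
  qed
qed

lemma card_V: "card V = CARD('n) + 1"
  unfolding V_def using card_image[OF inj_v] by simp

lemma fin_V: "finite V" unfolding V_def by simp

lemma indep: "\<not> affine_dependent V"
  using affine_independent_iff_card[of V] fin_V card_V aff_V by simp

lemma aff_sub: assumes "c \<subseteq> V" shows "aff_dim (convex hull c) = int (card c) - 1"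
proof -
  have "\<not> affine_dependent c" using indep assms affine_dependent_subset by blast
  then show ?thesis using affine_independent_iff_card[of c] aff_dim_convex_hull[of c] by simp
qed

lemma facet_far:
  assumes f: "f face_of kuhn_simplex p" "aff_dim f = int CARD('n) - 1"
  shows "\<exists>k\<le>CARD('n). \<forall>y\<in>f. dist (v k) y \<ge> 1 / sqrt 2"
proof -
  obtain c where c: "c \<subseteq> V" "f = convex hull c"
    using f(1) face_of_convex_hull_affine_independent[OF indep] T_eq by auto
  have "c \<noteq> V"
  proof
    assume "c = V"
    then have "aff_dim f = int CARD('n)" using c(2) aff_sub[of V] card_V by simp
    then show False using f(2) by simp
  qed
  then obtain k where k: "k \<le> CARD('n)" "v k \<notin> c" using c(1) unfolding V_def by auto
  have "c \<subseteq> {y. inner (u k) y = b k}"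
  proof
    fix y assume "y \<in> c"
    then obtain l where l: "l \<le> CARD('n)" "y = v l" "l \<noteq> k" using c(1) k(2) unfolding V_def by auto
    then have "lam y k = 0" using lam_v by simp
    then show "y \<in> {y. inner (u k) y = b k}" by (simp add: lam_inner)
  qed
  then have fH: "f \<subseteq> {y. inner (u k) y = b k}" using c(2) by (simp add: hull_minimal convex_hyperplane)
  have "dist (v k) y \<ge> 1 / sqrt 2" if "y \<in> f" for y
  proof -
    have "lam y k = 0" using fH that by (simp add: lam_inner subset_iff)
    then have "inner (u k) (v k - y) = 1" using lam_diff[of "v k" k y] lam_v k by simp
    then have "1 \<le> norm (u k) * norm (v k - y)" using Cauchy_Schwarz_ineq2[of "u k" "v k - y"] by simp
    also have "\<dots> \<le> sqrt 2 * norm (v k - y)"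
      using norm_u[OF k(1)] by (intro mult_right_mono) auto
    finally show ?thesis by (simp add: dist_norm field_simps)
  qed
  then show ?thesis using k by blast
qed

lemma dist_T: "x \<in> kuhn_simplex p \<Longrightarrow> y \<in> kuhn_simplex p \<Longrightarrow> dist x y \<le> sqrt (real CARD('n))"
proof -
  assume xy: "x \<in> kuhn_simplex p" "y \<in> kuhn_simplex p"
  have "bounded (kuhn_simplex p)" using T_ball bounded_cball bounded_subset by blast
  then have "dist x y \<le> diameter (kuhn_simplex p)" using xy by (rule diameter_bounded_bound)
  then show ?thesis by (simp only: diam)
qed

lemma sup_ge:
  assumes f: "f face_of kuhn_simplex p" "aff_dim f = int CARD('n) - 1"
  shows "Sup ((\<lambda>x. infdist x f) ` kuhn_simplex p) \<ge> 1 / sqrt 2"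
proof -
  obtain k where k: "k \<le> CARD('n)" "\<forall>y\<in>f. dist (v k) y \<ge> 1 / sqrt 2" using facet_far[OF f] by blast
  have fne: "f \<noteq> {}" using f(2) two by auto
  have fT: "f \<subseteq> kuhn_simplex p" using f(1) face_of_imp_subset by blast
  then obtain y0 where y0: "y0 \<in> f" "y0 \<in> kuhn_simplex p" using fne by auto
  have "infdist (v k) f \<ge> 1 / sqrt 2"
    unfolding infdist_notempty[OF fne] using k(2) fne by (intro cINF_greatest) auto
  moreover have "bdd_above ((\<lambda>x. infdist x f) ` kuhn_simplex p)"
  proof (rule bdd_aboveI2)
    fix x assume "x \<in> kuhn_simplex p"
    then show "infdist x f \<le> sqrt (real CARD('n))"
      using infdist_le[OF y0(1), of x] dist_T[of x y0] y0 by linarith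
  qed
  ultimately show ?thesis using v_in_T[OF k(1)] by (intro cSup_upper2) auto
qed

lemma inner_UU: "inner (U i) (U j) = (if i = j \<and> 1 \<le> i \<and> i \<le> CARD('n) then 1 else 0)"
  unfolding U_def using p_eq[of i j] by (auto simp: inner_axis_axis)

lemma inner_u1: "inner (u j) (u 1) = (if j = 1 then 2 else if j = 0 \<or> j = 2 then -1 else 0)"
  unfolding u_def using two by (auto simp: inner_diff_left inner_diff_right inner_UU)

definition "F1 = convex hull (V - {v 1})"

lemma F1_face: "F1 face_of kuhn_simplex p"
  unfolding F1_def T_eq face_of_convex_hull_affine_independent[OF indep] by blast

lemma F1_aff: "aff_dim F1 = int CARD('n) - 1"
proof -
  have "v 1 \<in> V" unfolding V_def using two by auto
  then have "card (V - {v 1}) = CARD('n)" using card_V fin_V by simp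
  then show ?thesis unfolding F1_def using aff_sub[of "V - {v 1}"] by simp
qed

lemma proj: assumes x: "x \<in> kuhn_simplex p" shows "\<exists>y\<in>F1. dist x y \<le> 1 / sqrt 2"
proof -
  define t where "t = lam x 1"
  define y where "y = x - (t/2) *\<^sub>R u 1"
  have lx: "0 \<le> lam x j" if "j \<le> CARD('n)" for j using x that unfolding T_H H_def by auto
  have t0: "0 \<le> t" unfolding t_def using lx two by simp
  have t1: "t \<le> 1"
  proof -
    have "t \<le> (\<Sum>k\<le>CARD('n). lam x k)" unfolding t_def
      using two lx by (intro member_le_sum) auto
    then show ?thesis using sum_lam by simp
  qed
  have ly: "lam y j = lam x j - (t/2) * inner (u j) (u 1)" for j
    using lam_diff[of y j x] unfolding y_def by (simp add: inner_diff_right algebra_simps)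
  have ly1: "lam y 1 = 0" using ly[of 1] inner_u1[of 1] by (simp add: t_def)
  have lyj: "0 \<le> lam y j" if "j \<le> CARD('n)" for j
    using ly[of j] inner_u1[of j] lx[OF that] t0 ly1 by (auto simp: t_def split: if_splits)
  have yH: "y = (\<Sum>k\<in>{..CARD('n)} - {1}. lam y k *\<^sub>R v k)"
  proof -
    have "y = (\<Sum>k\<le>CARD('n). lam y k *\<^sub>R v k)" using combo[of y] by simp
    also have "\<dots> = lam y 1 *\<^sub>R v 1 + (\<Sum>k\<in>{..CARD('n)} - {1}. lam y k *\<^sub>R v k)"
      using two by (subst sum.remove[of _ 1]) auto
    finally show ?thesis using ly1 by simp
  qed
  have "(\<Sum>k\<in>{..CARD('n)} - {1}. lam y k *\<^sub>R v k) \<in> F1"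
    unfolding F1_def
  proof (rule convex_sum)
    have "(\<Sum>k\<le>CARD('n). lam y k) = lam y 1 + (\<Sum>k\<in>{..CARD('n)} - {1}. lam y k)"
      using two by (subst sum.remove[of _ 1]) auto
    then show "(\<Sum>k\<in>{..CARD('n)} - {1}. lam y k) = 1" using sum_lam ly1 by simp
    show "\<And>k. k \<in> {..CARD('n)} - {1} \<Longrightarrow> 0 \<le> lam y k" using lyj by auto
    show "\<And>k. k \<in> {..CARD('n)} - {1} \<Longrightarrow> v k \<in> convex hull (V - {v 1})"
    proof -
      fix k assume k: "k \<in> {..CARD('n)} - {1}"
      have "v k \<noteq> v 1" using inj_v k two by (metis DiffE atMost_iff inj_on_def one_le_numeral order_trans singletonI)
      then have "v k \<in> V - {v 1}" using k unfolding V_def by auto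
      then show "v k \<in> convex hull (V - {v 1})" by (simp add: hull_inc)
    qed
  qed auto
  then have yF: "y \<in> F1" using yH by simp
  have "dist x y = (t/2) * sqrt 2"
    unfolding y_def dist_norm using norm_u[of 1] two t0 by simp
  also have "\<dots> \<le> 1 / sqrt 2" using t1 t0
    by (simp add: field_simps)
  finally show ?thesis using yF by blast
qed

lemma sup_F1: "Sup ((\<lambda>x. infdist x F1) ` kuhn_simplex p) = 1 / sqrt 2"
proof (rule antisym)
  show "Sup ((\<lambda>x. infdist x F1) ` kuhn_simplex p) \<le> 1 / sqrt 2"
  proof (rule cSup_least)
    show "(\<lambda>x. infdist x F1) ` kuhn_simplex p \<noteq> {}" using v_in_T[of 0] by auto
    fix r assume "r \<in> (\<lambda>x. infdist x F1) ` kuhn_simplex p"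
    then obtain x where x: "x \<in> kuhn_simplex p" "r = infdist x F1" by auto
    obtain y where "y \<in> F1" "dist x y \<le> 1 / sqrt 2" using proj[OF x(1)] by blast
    then show "r \<le> 1 / sqrt 2" using x(2) infdist_le2 by blast
  qed
  show "1 / sqrt 2 \<le> Sup ((\<lambda>x. infdist x F1) ` kuhn_simplex p)"
    by (rule sup_ge[OF F1_face F1_aff])
qed

lemma minh: "min_height (kuhn_simplex p) = 1 / sqrt 2"
  unfolding min_height_def
proof (rule cInf_eq_minimum)
  show "1 / sqrt 2 \<in> (\<lambda>f. Sup ((\<lambda>x. infdist x f) ` kuhn_simplex p)) `
      {f. f face_of kuhn_simplex p \<and> aff_dim f = int CARD('n) - 1}"
    by (rule image_eqI[where x=F1]) (use sup_F1 F1_face F1_aff in auto)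
  fix r assume "r \<in> (\<lambda>f. Sup ((\<lambda>x. infdist x f) ` kuhn_simplex p)) `
      {f. f face_of kuhn_simplex p \<and> aff_dim f = int CARD('n) - 1}"
  then show "1 / sqrt 2 \<le> r" using sup_ge by auto
qed

end

theorem lemmaA5:
  fixes p :: "nat \<Rightarrow> 'n::finite" and T :: "(real^'n) set"
  assumes "CARD('n) \<ge> 2"
    and "bij_betw p {1..CARD('n)} (UNIV :: 'n set)"
    and "T = kuhn_simplex p"
  shows "diameter T = sqrt (real CARD('n)) \<and> circum_diam T = sqrt (real CARD('n))
    \<and> min_height T = 1 / sqrt 2
    \<and> 1 / in_diam T = 1 + (real CARD('n) - 1) / sqrt 2
    \<and> gamma_ratio T = sqrt (real CARD('n)) * (1 + (real CARD('n) - 1) / sqrt 2)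
    \<and> 2 * gamma_ratio T * diameter T / min_height T
        = 2 * real CARD('n) * (real CARD('n) + sqrt 2 - 1)"
proof -
  interpret k: kuhn p using assms(1,2) by unfold_locales
  have s2: "sqrt 2 * sqrt 2 = (2::real)" by simp
  have sn: "sqrt (real CARD('n)) * sqrt (real CARD('n)) = real CARD('n)" by simp
  have inv: "1 / in_diam T = 1 + (real CARD('n) - 1) / sqrt 2"
    unfolding assms(3) k.indiam k.r0_def using k.den_pos
    by (simp add: field_simps s2)
  have gam: "gamma_ratio T = sqrt (real CARD('n)) * (1 + (real CARD('n) - 1) / sqrt 2)"
    using inv unfolding gamma_ratio_def assms(3) k.circ
    by (metis divide_inverse_commute divide_real_def inverse_eq_divide)
  have last: "2 * gamma_ratio T * diameter T / min_height T
        = 2 * real CARD('n) * (real CARD('n) + sqrt 2 - 1)"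
  proof -
    have "2 * gamma_ratio T * diameter T / min_height T
        = 2 * (sqrt (real CARD('n)) * sqrt (real CARD('n))) * (1 + (real CARD('n) - 1) / sqrt 2) * sqrt 2"
      unfolding gam using k.diam k.minh assms(3) by simp
    also have "\<dots> = 2 * real CARD('n) * (sqrt 2 + (real CARD('n) - 1))"
      unfolding sn by (simp add: field_simps s2)
    finally show ?thesis by simp
  qed
  show ?thesis using k.diam k.circ k.minh inv gam last assms(3) by simp
qed

end
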